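(* Let $j_0<j_f$ and let $\phi^*=(\phi^*_{j_0},\dots,\phi^*_{j_f-1})$ be the slot allocation of an optimal schedule for $\mathcal{D}(\theta_{j_0},\theta_{j_f})$, i.e. $n\phi^*_j$ is the number of bits transmitted in slot $j$ by an admissible schedule achieving $\mathcal{D}(\theta_{j_0},\theta_{j_f})=n\sum_j\phi^*_j$, where bits of each slot are transmitted back-to-back from the earliest available time. For $t\in[\theta_{j_0},\theta_{j_0+1})$ define $$\hat{\mathcal{D}}(t,\theta_{j_f}):=\max\big\{0,\ n\lfloor\phi^*_{j_0}-R_{j_0}(t-\theta_{j_0})\rfloor\big\}+n\sum_{j=j_0+1}^{j_f-1}\phi^*_j.$$ Then $0\le\mathcal{D}(t,\theta_{j_f})-\hat{\mathcal{D}}(t,\theta_{j_f})\le n$.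
   Context: The channel is described by $R$ and $\bar p$, piecewise constant: there is a strictly increasing sequence $\{\theta_j\}_{j\ge0}$ with $R(t)=R_j>0$ and $\bar p(t)=\bar\pi_j\in\mathbb{Z}_{\ge0}$ for $t\in I_j:=(\theta_j,\theta_{j+1}]$; $n\in\mathbb{Z}_{>0}$. A transmission at time $t_k$ of $np_k$ bits ($p_k\in\mathbb{Z}_{\ge0}$) is admissible if $p_k\le\bar p(t_k)$; it is received after $\Delta(t_k,p_k):=p_k/R(t_k)$ time (worst case), and $t_{k+1}\ge t_k+\Delta(t_k,p_k)$, $t_1<t_2<\cdots$. The data capacity $\mathcal{D}(\tau_1,\tau_2)$ is the maximum over all admissible sequences of $n\sum_kp_k$, the sum over $k$ with $t_k\ge\tau_1$ and $t_k+\Delta(t_k,p_k)\le\tau_2$. *)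

theory Defs
  imports Complex_Main
begin

text \<open>The slot boundaries are given by theta (strictly increasing),
  slot j is the interval I_j = (theta j, theta (j+1)], the rate on slot j is R j and
  the maximal admissible packet count on slot j is pbar j.\<close>

definition in_slot :: "(nat \<Rightarrow> real) \<Rightarrow> nat \<Rightarrow> real \<Rightarrow> bool" where
  "in_slot \<theta> j t \<longleftrightarrow> \<theta> j < t \<and> t \<le> \<theta> (Suc j)"

definition slot_of :: "(nat \<Rightarrow> real) \<Rightarrow> real \<Rightarrow> nat" where
  "slot_of \<theta> t = (THE j. in_slot \<theta> j t)"

definition Delta :: "(nat \<Rightarrow> real) \<Rightarrow> (nat \<Rightarrow> real) \<Rightarrow> real \<Rightarrow> nat \<Rightarrow> real" where
  "Delta \<theta> R t p = real p / R (slot_of \<theta> t)"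

text \<open>A transmission sequence is a list of pairs (t_k, p_k): at time t_k, n*p_k bits are sent.\<close>
definition admissible_seq ::
  "(nat \<Rightarrow> real) \<Rightarrow> (nat \<Rightarrow> real) \<Rightarrow> (nat \<Rightarrow> nat) \<Rightarrow> (real \<times> nat) list \<Rightarrow> bool" where
  "admissible_seq \<theta> R pbar s \<longleftrightarrow>
     (\<forall>k < length s. (\<exists>j. in_slot \<theta> j (fst (s!k))) \<and> snd (s!k) \<le> pbar (slot_of \<theta> (fst (s!k)))) \<and>
     (\<forall>k. Suc k < length s \<longrightarrow>
        fst (s!k) < fst (s!Suc k) \<and>
        fst (s!k) + Delta \<theta> R (fst (s!k)) (snd (s!k)) \<le> fst (s!Suc k))"

definition in_window ::
  "(nat \<Rightarrow> real) \<Rightarrow> (nat \<Rightarrow> real) \<Rightarrow> real \<Rightarrow> real \<Rightarrow> (real \<times> nat) list \<Rightarrow> nat set" where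
  "in_window \<theta> R \<tau>1 \<tau>2 s = {k. k < length s \<and> \<tau>1 \<le> fst (s!k) \<and>
                                 fst (s!k) + Delta \<theta> R (fst (s!k)) (snd (s!k)) \<le> \<tau>2}"

definition window_count ::
  "(nat \<Rightarrow> real) \<Rightarrow> (nat \<Rightarrow> real) \<Rightarrow> real \<Rightarrow> real \<Rightarrow> (real \<times> nat) list \<Rightarrow> nat" where
  "window_count \<theta> R \<tau>1 \<tau>2 s = (\<Sum>k \<in> in_window \<theta> R \<tau>1 \<tau>2 s. snd (s!k))"

definition data_capacity ::
  "(nat \<Rightarrow> real) \<Rightarrow> (nat \<Rightarrow> real) \<Rightarrow> (nat \<Rightarrow> nat) \<Rightarrow> nat \<Rightarrow> real \<Rightarrow> real \<Rightarrow> nat" where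
  "data_capacity \<theta> R pbar n \<tau>1 \<tau>2 =
     Sup {n * window_count \<theta> R \<tau>1 \<tau>2 s | s. admissible_seq \<theta> R pbar s}"

definition slot_alloc ::
  "(nat \<Rightarrow> real) \<Rightarrow> (nat \<Rightarrow> real) \<Rightarrow> real \<Rightarrow> real \<Rightarrow> (real \<times> nat) list \<Rightarrow> nat \<Rightarrow> nat" where
  "slot_alloc \<theta> R \<tau>1 \<tau>2 s j =
     (\<Sum>k \<in> {k \<in> in_window \<theta> R \<tau>1 \<tau>2 s. in_slot \<theta> j (fst (s!k))}. snd (s!k))"

end

theory Submission
  imports Defs
begin

definition valid :: "(nat \<Rightarrow> real) \<Rightarrow> (nat \<Rightarrow> nat) \<Rightarrow> real \<times> nat \<Rightarrow> bool" where
  "valid \<theta> pbar a \<longleftrightarrow> (\<exists>j. in_slot \<theta> j (fst a)) \<and> snd a \<le> pbar (slot_of \<theta> (fst a))"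

definition dl :: "(nat \<Rightarrow> real) \<Rightarrow> (nat \<Rightarrow> real) \<Rightarrow> real \<times> nat \<Rightarrow> real" where
  "dl \<theta> R a = Delta \<theta> R (fst a) (snd a)"

definition good where
  "good \<theta> R pbar \<tau>1 \<tau>2 A \<longleftrightarrow> finite A \<and> inj_on fst A \<and>
     (\<forall>a\<in>A. valid \<theta> pbar a \<and> \<tau>1 \<le> fst a \<and> fst a + dl \<theta> R a \<le> \<tau>2) \<and>
     (\<forall>a\<in>A. \<forall>b\<in>A. fst a < fst b \<longrightarrow> fst a + dl \<theta> R a \<le> fst b)"

definition wset where
  "wset \<theta> R \<tau>1 \<tau>2 s = (\<lambda>k. s!k) ` in_window \<theta> R \<tau>1 \<tau>2 s"

lemma slot_unique:
  assumes "strict_mono \<theta>" "in_slot \<theta> j t" shows "slot_of \<theta> t = j"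
  unfolding slot_of_def
proof (rule the_equality)
  show "in_slot \<theta> j t" by fact
  fix i assume i: "in_slot \<theta> i t"
  show "i = j"
  proof (rule ccontr)
    assume "i \<noteq> j"
    then consider "i < j" | "j < i" by linarith
    then show False
    proof cases
      case 1
      then have "\<theta> (Suc i) \<le> \<theta> j" using assms(1) by (simp add: strict_mono_less_eq)
      then show False using i assms(2) unfolding in_slot_def by linarith
    next
      case 2
      then have "\<theta> (Suc j) \<le> \<theta> i" using assms(1) by (simp add: strict_mono_less_eq)
      then show False using i assms(2) unfolding in_slot_def by linarith
    qed
  qed
qed

lemma Delta_nonneg: assumes "\<And>j. R j > 0" shows "Delta \<theta> R t p \<ge> 0"
  unfolding Delta_def using assms[of "slot_of \<theta> t"] by simp

lemma chain:
  assumes adm: "admissible_seq \<theta> R pbar s" and Rp: "\<And>j. R j > 0"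
    and "i < k" "k < length s"
  shows "fst (s!i) < fst (s!k) \<and> fst (s!i) + Delta \<theta> R (fst (s!i)) (snd (s!i)) \<le> fst (s!k)"
  using assms(3,4)
proof (induction k)
  case 0 then show ?case by simp
next
  case (Suc k)
  have step: "fst (s!k) < fst (s!Suc k) \<and> fst (s!k) + Delta \<theta> R (fst (s!k)) (snd (s!k)) \<le> fst (s!Suc k)"
    using adm Suc.prems unfolding admissible_seq_def by blast
  show ?case
  proof (cases "i = k")
    case True then show ?thesis using step by simp
  next
    case False
    then have "i < k" using Suc.prems by simp
    then have "fst (s!i) < fst (s!k) \<and> fst (s!i) + Delta \<theta> R (fst (s!i)) (snd (s!i)) \<le> fst (s!k)"
      using Suc by simp
    moreover have "Delta \<theta> R (fst (s!k)) (snd (s!k)) \<ge> 0" by (rule Delta_nonneg[OF Rp])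
    ultimately show ?thesis using step by linarith
  qed
qed

lemma adm_inj:
  assumes adm: "admissible_seq \<theta> R pbar s" and Rp: "\<And>j. R j > 0"
  shows "inj_on (\<lambda>k. s!k) {..<length s}"
proof (rule inj_onI)
  fix i k assume "i \<in> {..<length s}" "k \<in> {..<length s}" "s!i = s!k"
  then show "i = k" using chain[OF adm Rp, of i k] chain[OF adm Rp, of k i]
    by (metis lessThan_iff less_irrefl linorder_neqE_nat)
qed

lemma G1:
  assumes adm: "admissible_seq \<theta> R pbar s" and Rp: "\<And>j. R j > 0"
  shows "good \<theta> R pbar \<tau>1 \<tau>2 (wset \<theta> R \<tau>1 \<tau>2 s)"
    and "window_count \<theta> R \<tau>1 \<tau>2 s = (\<Sum>a\<in>wset \<theta> R \<tau>1 \<tau>2 s. snd a)"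
    and "slot_alloc \<theta> R \<tau>1 \<tau>2 s j = (\<Sum>a\<in>{a\<in>wset \<theta> R \<tau>1 \<tau>2 s. in_slot \<theta> j (fst a)}. snd a)"
proof -
  have sub: "in_window \<theta> R \<tau>1 \<tau>2 s \<subseteq> {..<length s}" unfolding in_window_def by auto
  have inj: "inj_on (\<lambda>k. s!k) (in_window \<theta> R \<tau>1 \<tau>2 s)"
    using adm_inj[OF adm Rp] sub inj_on_subset by blast
  show "window_count \<theta> R \<tau>1 \<tau>2 s = (\<Sum>a\<in>wset \<theta> R \<tau>1 \<tau>2 s. snd a)"
    unfolding window_count_def wset_def using sum.reindex[OF inj, of snd] unfolding comp_def by (rule sym)
  have inj2: "inj_on (\<lambda>k. s!k) {k \<in> in_window \<theta> R \<tau>1 \<tau>2 s. in_slot \<theta> j (fst (s!k))}"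
    by (rule inj_on_subset[OF inj]) blast
  have im: "{a\<in>wset \<theta> R \<tau>1 \<tau>2 s. in_slot \<theta> j (fst a)} = (\<lambda>k. s!k) ` {k \<in> in_window \<theta> R \<tau>1 \<tau>2 s. in_slot \<theta> j (fst (s!k))}"
    unfolding wset_def by blast
  show "slot_alloc \<theta> R \<tau>1 \<tau>2 s j = (\<Sum>a\<in>{a\<in>wset \<theta> R \<tau>1 \<tau>2 s. in_slot \<theta> j (fst a)}. snd a)"
    unfolding slot_alloc_def im using sum.reindex[OF inj2, of snd] unfolding comp_def by (rule sym)
  have fin: "finite (wset \<theta> R \<tau>1 \<tau>2 s)" unfolding wset_def using sub finite_subset by blast
  have injf: "inj_on fst (wset \<theta> R \<tau>1 \<tau>2 s)"
  proof (rule inj_onI)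
    fix a b assume a: "a \<in> wset \<theta> R \<tau>1 \<tau>2 s" and b: "b \<in> wset \<theta> R \<tau>1 \<tau>2 s" and e: "fst a = fst b"
    obtain i where i: "i \<in> in_window \<theta> R \<tau>1 \<tau>2 s" "a = s!i" using a unfolding wset_def by blast
    obtain k where k: "k \<in> in_window \<theta> R \<tau>1 \<tau>2 s" "b = s!k" using b unfolding wset_def by blast
    have il: "i < length s" "k < length s" using i k sub by auto
    have "i = k"
    proof (rule linorder_cases[of i k])
      assume "i < k" then show ?thesis using chain[OF adm Rp, of i k] il i k e by simp
    next
      assume "k < i" then show ?thesis using chain[OF adm Rp, of k i] il i k e by simp
    qed
    then show "a = b" using i k by simp
  qed
  have each: "\<forall>a\<in>wset \<theta> R \<tau>1 \<tau>2 s. valid \<theta> pbar a \<and> \<tau>1 \<le> fst a \<and> fst a + dl \<theta> R a \<le> \<tau>2"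
  proof
    fix a assume a: "a \<in> wset \<theta> R \<tau>1 \<tau>2 s"
    obtain i where i: "i \<in> in_window \<theta> R \<tau>1 \<tau>2 s" "a = s!i" using a unfolding wset_def by blast
    have iw: "i < length s" "\<tau>1 \<le> fst (s!i)" "fst (s!i) + Delta \<theta> R (fst (s!i)) (snd (s!i)) \<le> \<tau>2"
      using i(1) unfolding in_window_def by auto
    have "(\<exists>j. in_slot \<theta> j (fst (s!i))) \<and> snd (s!i) \<le> pbar (slot_of \<theta> (fst (s!i)))"
      using adm iw(1) unfolding admissible_seq_def by blast
    then show "valid \<theta> pbar a \<and> \<tau>1 \<le> fst a \<and> fst a + dl \<theta> R a \<le> \<tau>2"
      using iw i(2) unfolding valid_def dl_def by simp
  qed
  have pw: "\<forall>a\<in>wset \<theta> R \<tau>1 \<tau>2 s. \<forall>b\<in>wset \<theta> R \<tau>1 \<tau>2 s. fst a < fst b \<longrightarrow> fst a + dl \<theta> R a \<le> fst b"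
  proof (intro ballI impI)
    fix a b assume a: "a \<in> wset \<theta> R \<tau>1 \<tau>2 s" and b: "b \<in> wset \<theta> R \<tau>1 \<tau>2 s" and lt: "fst a < fst b"
    obtain i where i: "i \<in> in_window \<theta> R \<tau>1 \<tau>2 s" "a = s!i" using a unfolding wset_def by blast
    obtain k where k: "k \<in> in_window \<theta> R \<tau>1 \<tau>2 s" "b = s!k" using b unfolding wset_def by blast
    have il: "i < length s" "k < length s" using i k sub by auto
    have "i < k"
    proof (rule linorder_cases[of i k])
      assume "i = k" then show ?thesis using i k lt by simp
    next
      assume "k < i" then show ?thesis using chain[OF adm Rp, of k i] il i k lt by simp
    qed
    then show "fst a + dl \<theta> R a \<le> fst b" using chain[OF adm Rp, of i k] i k il unfolding dl_def by simp
  qed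
  show "good \<theta> R pbar \<tau>1 \<tau>2 (wset \<theta> R \<tau>1 \<tau>2 s)"
    unfolding good_def using fin injf each pw by blast
qed


lemma good_subset: "good \<theta> R pbar \<tau>1 \<tau>2 A \<Longrightarrow> B \<subseteq> A \<Longrightarrow> good \<theta> R pbar \<tau>1 \<tau>2 B"
  unfolding good_def using finite_subset inj_on_subset by (metis subsetD)

lemma max_elem:
  fixes A :: "(real \<times> nat) set"
  assumes "finite A" "A \<noteq> {}"
  obtains m where "m \<in> A" "\<And>a. a \<in> A \<Longrightarrow> fst a \<le> fst m"
proof -
  have "Max (fst ` A) \<in> fst ` A" using assms by simp
  then obtain m where m: "m \<in> A" "fst m = Max (fst ` A)" by auto
  have "\<And>a. a \<in> A \<Longrightarrow> fst a \<le> fst m" unfolding m(2) using assms(1) by simp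
  then show ?thesis using that m(1) by blast
qed

lemma sumdl:
  fixes d :: "real \<times> nat \<Rightarrow> real"
  shows "finite A \<Longrightarrow> inj_on fst A \<Longrightarrow> \<forall>a\<in>A. \<forall>b\<in>A. fst a < fst b \<longrightarrow> fst a + d a \<le> fst b
   \<Longrightarrow> \<forall>a\<in>A. lo \<le> fst a \<and> fst a + d a \<le> hi \<Longrightarrow> lo \<le> hi \<Longrightarrow> (\<Sum>a\<in>A. d a) \<le> hi - lo"
proof (induction "card A" arbitrary: A hi)
  case 0
  then have "A = {}" by simp
  then show ?case using 0 by simp
next
  case (Suc N)
  then have ne: "A \<noteq> {}" by auto
  obtain m where m: "m \<in> A" "\<And>a. a \<in> A \<Longrightarrow> fst a \<le> fst m" using max_elem[OF Suc(3) ne] by blast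
  define B where "B = A - {m}"
  have cB: "N = card B" unfolding B_def using Suc(2) m(1) Suc(3) by simp
  have lt: "\<And>b. b \<in> B \<Longrightarrow> fst b < fst m"
  proof -
    fix b assume b: "b \<in> B"
    then have "b \<in> A" "b \<noteq> m" unfolding B_def by auto
    then have "fst b \<noteq> fst m" using Suc(4) m(1) unfolding inj_on_def by blast
    then show "fst b < fst m" using m(2)[OF \<open>b \<in> A\<close>] by simp
  qed
  have IH: "(\<Sum>a\<in>B. d a) \<le> fst m - lo"
  proof (rule Suc(1)[OF cB])
    show "finite B" using Suc(3) unfolding B_def by simp
    show "inj_on fst B" using Suc(4) unfolding B_def by (rule inj_on_subset) blast
    show "\<forall>a\<in>B. \<forall>b\<in>B. fst a < fst b \<longrightarrow> fst a + d a \<le> fst b" using Suc(5) unfolding B_def by blast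
    show "\<forall>a\<in>B. lo \<le> fst a \<and> fst a + d a \<le> fst m"
      using Suc(5,6) lt m(1) unfolding B_def by blast
    show "lo \<le> fst m" using Suc(6) m(1) by blast
  qed
  have "(\<Sum>a\<in>A. d a) = d m + (\<Sum>a\<in>B. d a)" unfolding B_def using Suc(3) m(1) by (simp add: sum.remove)
  moreover have "fst m + d m \<le> hi" using Suc(6) m(1) by blast
  ultimately show ?case using IH by linarith
qed

lemma adm_snoc:
  assumes adm: "admissible_seq \<theta> R pbar s" and v: "valid \<theta> pbar m"
    and lt: "\<forall>a\<in>set s. fst a < fst m \<and> fst a + dl \<theta> R a \<le> fst m"
  shows "admissible_seq \<theta> R pbar (s @ [m])"
proof -
  have P1: "\<forall>k < length (s @ [m]). (\<exists>j. in_slot \<theta> j (fst ((s @ [m]) ! k))) \<and> snd ((s @ [m]) ! k) \<le> pbar (slot_of \<theta> (fst ((s @ [m]) ! k)))"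
  proof (intro allI impI)
    fix k assume k: "k < length (s @ [m])"
    show "(\<exists>j. in_slot \<theta> j (fst ((s @ [m]) ! k))) \<and> snd ((s @ [m]) ! k) \<le> pbar (slot_of \<theta> (fst ((s @ [m]) ! k)))"
    proof (cases "k < length s")
      case True
      then show ?thesis using adm unfolding admissible_seq_def by (simp add: nth_append)
    next
      case False
      then have "k = length s" using k by simp
      then show ?thesis using v unfolding valid_def by simp
    qed
  qed
  have P2: "\<forall>k. Suc k < length (s @ [m]) \<longrightarrow> fst ((s @ [m]) ! k) < fst ((s @ [m]) ! Suc k) \<and>
     fst ((s @ [m]) ! k) + Delta \<theta> R (fst ((s @ [m]) ! k)) (snd ((s @ [m]) ! k)) \<le> fst ((s @ [m]) ! Suc k)"
  proof (intro allI impI)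
    fix k assume k: "Suc k < length (s @ [m])"
    show "fst ((s @ [m]) ! k) < fst ((s @ [m]) ! Suc k) \<and>
     fst ((s @ [m]) ! k) + Delta \<theta> R (fst ((s @ [m]) ! k)) (snd ((s @ [m]) ! k)) \<le> fst ((s @ [m]) ! Suc k)"
    proof (cases "Suc k < length s")
      case True
      then show ?thesis using adm unfolding admissible_seq_def by (simp add: nth_append)
    next
      case False
      then have e: "Suc k = length s" using k by simp
      then have "s ! k \<in> set s" by (metis lessI nth_mem)
      then show ?thesis using lt e by (simp add: nth_append dl_def)
    qed
  qed
  show ?thesis unfolding admissible_seq_def using P1 P2 by blast
qed

lemma G2a:
  shows "good \<theta> R pbar \<tau>1 \<tau>2 A \<Longrightarrow> \<exists>s. admissible_seq \<theta> R pbar s \<and> set s = A \<and> distinct s"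
proof (induction "card A" arbitrary: A)
  case 0
  then have "A = {}" unfolding good_def by auto
  moreover have "admissible_seq \<theta> R pbar []" unfolding admissible_seq_def by simp
  ultimately show ?case by auto
next
  case (Suc N)
  have fin: "finite A" using Suc(3) unfolding good_def by blast
  then have ne: "A \<noteq> {}" using Suc(2) by auto
  obtain m where m: "m \<in> A" "\<And>a. a \<in> A \<Longrightarrow> fst a \<le> fst m" using max_elem[OF fin ne] by blast
  define B where "B = A - {m}"
  have cB: "N = card B" unfolding B_def using Suc(2) m(1) fin by simp
  have gB: "good \<theta> R pbar \<tau>1 \<tau>2 B" using good_subset[OF Suc(3)] unfolding B_def by blast
  obtain s where s: "admissible_seq \<theta> R pbar s" "set s = B" "distinct s" using Suc(1)[OF cB gB] by blast
  have lt: "\<forall>a\<in>set s. fst a < fst m \<and> fst a + dl \<theta> R a \<le> fst m"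
  proof
    fix b assume "b \<in> set s"
    then have b: "b \<in> A" "b \<noteq> m" using s(2) unfolding B_def by auto
    then have "fst b \<noteq> fst m" using Suc(3) m(1) unfolding good_def inj_on_def by blast
    then have "fst b < fst m" using m(2)[OF b(1)] by simp
    then show "fst b < fst m \<and> fst b + dl \<theta> R b \<le> fst m" using Suc(3) m(1) b(1) unfolding good_def by blast
  qed
  have v: "valid \<theta> pbar m" using Suc(3) m(1) unfolding good_def by blast
  have "admissible_seq \<theta> R pbar (s @ [m])" by (rule adm_snoc[OF s(1) v lt])
  moreover have "set (s @ [m]) = A" using s(2) m(1) unfolding B_def by auto
  moreover have "distinct (s @ [m])" using s(2,3) unfolding B_def by simp
  ultimately show ?case by blast
qed

lemma G2b:
  assumes "distinct s" "\<forall>a\<in>set s. \<tau>1 \<le> fst a \<and> fst a + dl \<theta> R a \<le> \<tau>2"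
  shows "window_count \<theta> R \<tau>1 \<tau>2 s = (\<Sum>a\<in>set s. snd a)"
proof -
  have iw: "in_window \<theta> R \<tau>1 \<tau>2 s = {..<length s}"
    using assms(2) unfolding in_window_def dl_def by (auto simp: nth_mem)
  have inj: "inj_on (\<lambda>k. s!k) {..<length s}" using assms(1) unfolding distinct_conv_nth inj_on_def by blast
  have st: "set s = (\<lambda>k. s!k) ` {..<length s}" by (auto simp: set_conv_nth)
  show ?thesis unfolding window_count_def iw st using sum.reindex[OF inj, of snd] unfolding comp_def by (rule sym)
qed

lemma G2:
  assumes "good \<theta> R pbar \<tau>1 \<tau>2 A"
  shows "\<exists>s. admissible_seq \<theta> R pbar s \<and> window_count \<theta> R \<tau>1 \<tau>2 s = (\<Sum>a\<in>A. snd a)"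
proof -
  obtain s where s: "admissible_seq \<theta> R pbar s" "set s = A" "distinct s" using G2a[OF assms] by blast
  have "\<forall>a\<in>set s. \<tau>1 \<le> fst a \<and> fst a + dl \<theta> R a \<le> \<tau>2" using assms s(2) unfolding good_def by blast
  then show ?thesis using G2b[OF s(3)] s by metis
qed


lemma valid_slot:
  assumes "strict_mono \<theta>" "valid \<theta> pbar a"
  shows "in_slot \<theta> (slot_of \<theta> (fst a)) (fst a)"
proof -
  obtain j where j: "in_slot \<theta> j (fst a)" using assms(2) unfolding valid_def by blast
  then show ?thesis using slot_unique[OF assms(1) j] by simp
qed

lemma bnd:
  assumes sm: "strict_mono \<theta>" and Rp: "\<And>j. R j > 0" and g: "good \<theta> R pbar \<tau>1 (\<theta> jf) A"
    and le: "\<tau>1 \<le> \<theta> jf"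
  shows "real (\<Sum>a\<in>A. snd a) \<le> Max (R ` {..<Suc jf}) * (\<theta> jf - \<tau>1)"
proof -
  define M where "M = Max (R ` {..<Suc jf})"
  have each: "real (snd a) \<le> dl \<theta> R a * M" if a: "a \<in> A" for a
  proof -
    let ?j = "slot_of \<theta> (fst a)"
    have v: "valid \<theta> pbar a" "fst a + dl \<theta> R a \<le> \<theta> jf" using g a unfolding good_def by auto
    have sl: "in_slot \<theta> ?j (fst a)" by (rule valid_slot[OF sm v(1)])
    have "dl \<theta> R a \<ge> 0" unfolding dl_def by (rule Delta_nonneg[OF Rp])
    then have "\<theta> ?j < \<theta> jf" using sl v(2) unfolding in_slot_def by linarith
    then have "?j < jf" using sm by (simp add: strict_mono_less)
    then have RM: "R ?j \<le> M" unfolding M_def by simp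
    have "real (snd a) = dl \<theta> R a * R ?j" unfolding dl_def Delta_def using Rp[of ?j] by simp
    also have "\<dots> \<le> dl \<theta> R a * M" using RM \<open>dl \<theta> R a \<ge> 0\<close> by (simp add: mult_left_mono)
    finally show ?thesis .
  qed
  have "real (\<Sum>a\<in>A. snd a) = (\<Sum>a\<in>A. real (snd a))" by simp
  also have "\<dots> \<le> (\<Sum>a\<in>A. dl \<theta> R a * M)" by (rule sum_mono) (rule each)
  also have "\<dots> = M * (\<Sum>a\<in>A. dl \<theta> R a)" by (simp add: sum_distrib_left mult.commute)
  also have "\<dots> \<le> M * (\<theta> jf - \<tau>1)"
  proof (rule mult_left_mono)
    show "(\<Sum>a\<in>A. dl \<theta> R a) \<le> \<theta> jf - \<tau>1"
      using g le unfolding good_def by (intro sumdl) auto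
    show "0 \<le> M" unfolding M_def using Rp[of 0] by (meson Max_ge finite_imageI finite_lessThan image_eqI lessThan_iff order.strict_iff_not order_trans zero_less_Suc)
  qed
  finally show ?thesis unfolding M_def .
qed

lemma cap_bdd:
  assumes sm: "strict_mono \<theta>" and Rp: "\<And>j. R j > 0" and le: "\<tau>1 \<le> \<theta> jf"
  shows "bdd_above {n * window_count \<theta> R \<tau>1 (\<theta> jf) s | s. admissible_seq \<theta> R pbar s}"
proof -
  define B where "B = n * nat \<lceil>Max (R ` {..<Suc jf}) * (\<theta> jf - \<tau>1)\<rceil>"
  have "x \<le> B" if xin: "x \<in> {n * window_count \<theta> R \<tau>1 (\<theta> jf) s | s. admissible_seq \<theta> R pbar s}" for x
  proof -
    obtain s where s: "x = n * window_count \<theta> R \<tau>1 (\<theta> jf) s" "admissible_seq \<theta> R pbar s" using xin by blast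
    have g: "good \<theta> R pbar \<tau>1 (\<theta> jf) (wset \<theta> R \<tau>1 (\<theta> jf) s)" by (rule G1(1)[OF s(2) Rp])
    have "real (window_count \<theta> R \<tau>1 (\<theta> jf) s) \<le> Max (R ` {..<Suc jf}) * (\<theta> jf - \<tau>1)"
      using bnd[OF sm Rp g le] G1(2)[OF s(2) Rp] by simp
    then have "window_count \<theta> R \<tau>1 (\<theta> jf) s \<le> nat \<lceil>Max (R ` {..<Suc jf}) * (\<theta> jf - \<tau>1)\<rceil>"
      by linarith
    then show ?thesis unfolding s(1) B_def by simp
  qed
  then show ?thesis by (rule bdd_aboveI)
qed

lemma cap_ge:
  assumes sm: "strict_mono \<theta>" and Rp: "\<And>j. R j > 0" and le: "\<tau>1 \<le> \<theta> jf"
    and g: "good \<theta> R pbar \<tau>1 (\<theta> jf) A"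
  shows "n * (\<Sum>a\<in>A. snd a) \<le> data_capacity \<theta> R pbar n \<tau>1 (\<theta> jf)"
proof -
  obtain s where s: "admissible_seq \<theta> R pbar s" "window_count \<theta> R \<tau>1 (\<theta> jf) s = (\<Sum>a\<in>A. snd a)"
    using G2[OF g] by blast
  have mem: "n * (\<Sum>a\<in>A. snd a) \<in> {n * window_count \<theta> R \<tau>1 (\<theta> jf) s | s. admissible_seq \<theta> R pbar s}"
    using s by (metis (mono_tags, lifting) mem_Collect_eq)
  show ?thesis unfolding data_capacity_def
    by (rule cSup_upper[OF mem cap_bdd[OF sm Rp le]])
qed

lemma cap_le:
  assumes Rp: "\<And>j. R j > 0"
    and H: "\<And>A. good \<theta> R pbar \<tau>1 \<tau>2 A \<Longrightarrow> n * (\<Sum>a\<in>A. snd a) \<le> B"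
  shows "data_capacity \<theta> R pbar n \<tau>1 \<tau>2 \<le> B"
  unfolding data_capacity_def
proof (rule cSup_least)
  have "admissible_seq \<theta> R pbar []" unfolding admissible_seq_def by simp
  then show "{n * window_count \<theta> R \<tau>1 \<tau>2 s | s. admissible_seq \<theta> R pbar s} \<noteq> {}" by blast
  fix x assume "x \<in> {n * window_count \<theta> R \<tau>1 \<tau>2 s | s. admissible_seq \<theta> R pbar s}"
  then obtain s where s: "x = n * window_count \<theta> R \<tau>1 \<tau>2 s" "admissible_seq \<theta> R pbar s" by blast
  show "x \<le> B" using H[OF G1(1)[OF s(2) Rp]] G1(2)[OF s(2) Rp] s(1) by simp
qed


lemma good_union:
  assumes "good \<theta> R pbar \<tau>1 \<tau>2 X" "good \<theta> R pbar \<tau>1 \<tau>2 Y"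
    and sep: "\<forall>x\<in>X. \<forall>y\<in>Y. fst x < fst y \<and> fst x + dl \<theta> R x \<le> fst y"
  shows "good \<theta> R pbar \<tau>1 \<tau>2 (X \<union> Y)"
    and "(\<Sum>a\<in>X \<union> Y. snd a) = (\<Sum>a\<in>X. snd a) + (\<Sum>a\<in>Y. snd a)"
proof -
  have dis: "X \<inter> Y = {}" using sep by fastforce
  have fin: "finite X" "finite Y" using assms(1,2) unfolding good_def by auto
  show "(\<Sum>a\<in>X \<union> Y. snd a) = (\<Sum>a\<in>X. snd a) + (\<Sum>a\<in>Y. snd a)"
    using sum.union_disjoint[OF fin dis] .
  have inj: "inj_on fst (X \<union> Y)"
  proof (rule inj_onI)
    fix a b assume a: "a \<in> X \<union> Y" and b: "b \<in> X \<union> Y" and e: "fst a = fst b"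
    show "a = b"
    proof (cases "a \<in> X")
      case True
      show ?thesis
      proof (cases "b \<in> X")
        case True then show ?thesis using \<open>a \<in> X\<close> e assms(1) unfolding good_def inj_on_def by blast
      next
        case False then have "b \<in> Y" using b by blast
        then show ?thesis using sep \<open>a \<in> X\<close> e by fastforce
      qed
    next
      case False then have aY: "a \<in> Y" using a by blast
      show ?thesis
      proof (cases "b \<in> X")
        case True then show ?thesis using sep aY e by fastforce
      next
        case False then have "b \<in> Y" using b by blast
        then show ?thesis using aY e assms(2) unfolding good_def inj_on_def by blast
      qed
    qed
  qed
  have pw: "\<forall>a\<in>X \<union> Y. \<forall>b\<in>X \<union> Y. fst a < fst b \<longrightarrow> fst a + dl \<theta> R a \<le> fst b"
  proof (intro ballI impI)
    fix a b assume a: "a \<in> X \<union> Y" and b: "b \<in> X \<union> Y" and lt: "fst a < fst b"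
    show "fst a + dl \<theta> R a \<le> fst b"
    proof (cases "a \<in> X")
      case True
      show ?thesis
      proof (cases "b \<in> X")
        case True then show ?thesis using \<open>a \<in> X\<close> lt assms(1) unfolding good_def by blast
      next
        case False then have "b \<in> Y" using b by blast
        then show ?thesis using sep \<open>a \<in> X\<close> by blast
      qed
    next
      case False then have aY: "a \<in> Y" using a by blast
      show ?thesis
      proof (cases "b \<in> X")
        case True then have "fst b < fst a" using sep aY by blast
        then show ?thesis using lt by simp
      next
        case False then have "b \<in> Y" using b by blast
        then show ?thesis using aY lt assms(2) unfolding good_def by blast
      qed
    qed
  qed
  show "good \<theta> R pbar \<tau>1 \<tau>2 (X \<union> Y)"
    using assms(1,2) inj pw unfolding good_def by blast
qed

lemma good_mono:
  "good \<theta> R pbar \<tau>1 \<tau>2 A \<Longrightarrow> \<tau>1' \<le> \<tau>1 \<Longrightarrow> good \<theta> R pbar \<tau>1' \<tau>2 A"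
  unfolding good_def by force

lemma good_raise:
  "good \<theta> R pbar \<tau>1 \<tau>2 A \<Longrightarrow> \<forall>a\<in>A. \<tau>1' \<le> fst a \<Longrightarrow> good \<theta> R pbar \<tau>1' \<tau>2 A"
  unfolding good_def by blast

lemma good_single:
  "valid \<theta> pbar a \<Longrightarrow> \<tau>1 \<le> fst a \<Longrightarrow> fst a + dl \<theta> R a \<le> \<tau>2 \<Longrightarrow> good \<theta> R pbar \<tau>1 \<tau>2 {a}"
  unfolding good_def by auto

lemma units:
  assumes sm: "strict_mono \<theta>" and Rp: "\<And>j. R j > 0"
    and lo: "\<theta> j0 < T - real c / R j0" and hi: "T \<le> \<theta> (Suc j0)" and pb: "1 \<le> pbar j0"
    and t1: "\<tau>1 \<le> T - real c / R j0" and t2: "T \<le> \<tau>2"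
  defines "U \<equiv> (\<lambda>i::nat. (T - real i / R j0, 1::nat)) ` {1..c}"
  shows "good \<theta> R pbar \<tau>1 \<tau>2 U" "\<forall>u\<in>U. fst u < T \<and> fst u + dl \<theta> R u \<le> T"
    "(\<Sum>a\<in>U. snd a) = c"
proof -
  let ?r = "R j0"
  have r: "?r > 0" by (rule Rp)
  have inj: "inj_on (\<lambda>i::nat. (T - real i / R j0, 1::nat)) {1..c}"
    by (rule inj_onI) (use r in auto)
  show "(\<Sum>a\<in>U. snd a) = c" unfolding U_def sum.reindex[OF inj] comp_def by simp
  have sl: "in_slot \<theta> j0 (T - real i / ?r)" if "i \<in> {1..c}" for i
  proof -
    have "real i \<le> real c" using that by simp
    then have "real i / ?r \<le> real c / ?r" using r by (simp add: divide_right_mono)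
    moreover have "real i / ?r > 0" using that r by simp
    ultimately show ?thesis unfolding in_slot_def using lo hi by linarith
  qed
  have so: "slot_of \<theta> (T - real i / ?r) = j0" if "i \<in> {1..c}" for i
    using slot_unique[OF sm sl[OF that]] .
  have dlu: "dl \<theta> R (T - real i / ?r, 1) = 1 / ?r" if "i \<in> {1..c}" for i
    unfolding dl_def Delta_def using so[OF that] by simp
  have endu: "T - real i / ?r + 1 / ?r = T - (real i - 1) / ?r" for i
    by (simp add: diff_divide_distrib)
  have each: "valid \<theta> pbar u \<and> \<tau>1 \<le> fst u \<and> fst u + dl \<theta> R u \<le> \<tau>2 \<and> fst u < T \<and> fst u + dl \<theta> R u \<le> T"
    if uU: "u \<in> U" for u
  proof -
    obtain i where i: "i \<in> {1..c}" "u = (T - real i / ?r, 1)" using uU unfolding U_def by blast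
    have "real i \<le> real c" using i by simp
    then have a1: "real i / ?r \<le> real c / ?r" using r by (simp add: divide_right_mono)
    have a2: "real i / ?r > 0" using i r by simp
    have a3: "(real i - 1) / ?r \<ge> 0" using i r by simp
    have v: "valid \<theta> pbar u" unfolding valid_def using i sl so pb by auto
    show ?thesis using v i a1 a2 a3 t1 t2 dlu[OF i(1)] endu[of i] by simp
  qed
  have pw: "\<forall>a\<in>U. \<forall>b\<in>U. fst a < fst b \<longrightarrow> fst a + dl \<theta> R a \<le> fst b"
  proof (intro ballI impI)
    fix a b assume a: "a \<in> U" and b: "b \<in> U" and lt: "fst a < fst b"
    obtain i where i: "i \<in> {1..c}" "a = (T - real i / ?r, 1)" using a unfolding U_def by blast
    obtain k where k: "k \<in> {1..c}" "b = (T - real k / ?r, 1)" using b unfolding U_def by blast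
    have "real k / ?r < real i / ?r" using lt i k by simp
    then have "real k < real i" using r by (simp add: divide_less_cancel)
    then have "k < i" by simp
    then have "real k \<le> real i - 1" by linarith
    then have "real k / ?r \<le> (real i - 1) / ?r" using r by (simp add: divide_right_mono)
    then show "fst a + dl \<theta> R a \<le> fst b" using i k dlu[OF i(1)] endu[of i] by simp
  qed
  have fin: "finite U" unfolding U_def by simp
  have injf: "inj_on fst U"
    by (rule inj_onI) (auto simp: U_def)
  show "good \<theta> R pbar \<tau>1 \<tau>2 U" unfolding good_def using fin injf pw each by blast
  show "\<forall>u\<in>U. fst u < T \<and> fst u + dl \<theta> R u \<le> T" using each by blast
qed


lemma min_elem:
  fixes A :: "(real \<times> nat) set"
  assumes "finite A" "A \<noteq> {}"
  obtains m where "m \<in> A" "\<And>a. a \<in> A \<Longrightarrow> fst m \<le> fst a"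
proof -
  have "Min (fst ` A) \<in> fst ` A" using assms by simp
  then obtain m where m: "m \<in> A" "fst m = Min (fst ` A)" by auto
  have "\<And>a. a \<in> A \<Longrightarrow> fst m \<le> fst a" unfolding m(2) using assms(1) by simp
  then show ?thesis using that m(1) by blast
qed

theorem proposition2:
  fixes \<theta> :: "nat \<Rightarrow> real" and R :: "nat \<Rightarrow> real" and pbar :: "nat \<Rightarrow> nat"
    and n :: nat and j0 jf :: nat and \<phi> :: "nat \<Rightarrow> nat" and t :: real
  assumes theta_mono: "strict_mono \<theta>"
    and R_pos: "\<And>j. R j > 0"
    and n_pos: "n > 0"
    and j_lt: "j0 < jf"
    and opt: "\<exists>s. admissible_seq \<theta> R pbar s \<and>
               n * window_count \<theta> R (\<theta> j0) (\<theta> jf) s = data_capacity \<theta> R pbar n (\<theta> j0) (\<theta> jf) \<and>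
               (\<forall>j \<in> {j0..<jf}. \<phi> j = slot_alloc \<theta> R (\<theta> j0) (\<theta> jf) s j)"
    and alloc_sum: "data_capacity \<theta> R pbar n (\<theta> j0) (\<theta> jf) = n * (\<Sum>j = j0..<jf. \<phi> j)"
    and t_in: "\<theta> j0 \<le> t" "t < \<theta> (Suc j0)"
  shows "0 \<le> real (data_capacity \<theta> R pbar n t (\<theta> jf)) -
              (max 0 (real n * of_int \<lfloor>real (\<phi> j0) - R j0 * (t - \<theta> j0)\<rfloor>)
               + real n * (\<Sum>j = Suc j0..<jf. real (\<phi> j)))
       \<and> real (data_capacity \<theta> R pbar n t (\<theta> jf)) -
              (max 0 (real n * of_int \<lfloor>real (\<phi> j0) - R j0 * (t - \<theta> j0)\<rfloor>)
               + real n * (\<Sum>j = Suc j0..<jf. real (\<phi> j))) \<le> real n"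
proof -
  note sm = theta_mono and Rp = R_pos
  obtain s0 where s0: "admissible_seq \<theta> R pbar s0"
    and phi: "\<forall>j \<in> {j0..<jf}. \<phi> j = slot_alloc \<theta> R (\<theta> j0) (\<theta> jf) s0 j"
    using opt by blast
  define W where "W = wset \<theta> R (\<theta> j0) (\<theta> jf) s0"
  have gW: "good \<theta> R pbar (\<theta> j0) (\<theta> jf) W" unfolding W_def by (rule G1(1)[OF s0 Rp])
  have phiA: "\<phi> j = (\<Sum>a\<in>{a\<in>W. in_slot \<theta> j (fst a)}. snd a)" if "j \<in> {j0..<jf}" for j
    using phi that G1(3)[OF s0 Rp] unfolding W_def by simp
  define r where "r = R j0"
  have r: "r > 0" unfolding r_def by (rule Rp)
  define x where "x = r * (t - \<theta> j0)"
  have x0: "x \<ge> 0" unfolding x_def using r t_in by simp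
  have tx: "t = \<theta> j0 + x / r" unfolding x_def using r by simp
  have th1: "\<theta> (Suc j0) \<le> \<theta> jf" using sm j_lt by (simp add: strict_mono_less_eq)
  have tle: "t \<le> \<theta> jf" using t_in th1 by simp
  define \<Phi> where "\<Phi> = (\<Sum>j = j0..<jf. \<phi> j)"
  define rest where "rest = (\<Sum>j = Suc j0..<jf. \<phi> j)"
  have Phi_split: "\<Phi> = \<phi> j0 + rest" unfolding \<Phi>_def rest_def using j_lt by (simp add: sum.atLeast_Suc_lessThan)
  have D1: "data_capacity \<theta> R pbar n (\<theta> j0) (\<theta> jf) = n * \<Phi>" using alloc_sum unfolding \<Phi>_def .
  have finW: "finite W" using gW unfolding good_def by blast
  have Wprops: "valid \<theta> pbar a \<and> \<theta> j0 \<le> fst a \<and> fst a + dl \<theta> R a \<le> \<theta> jf" if "a \<in> W" for a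
    using gW that unfolding good_def by blast
  have Wpw: "fst a + dl \<theta> R a \<le> fst b" if "a \<in> W" "b \<in> W" "fst a < fst b" for a b
    using gW that unfolding good_def by blast
  have dlnn: "dl \<theta> R a \<ge> 0" for a unfolding dl_def by (rule Delta_nonneg[OF Rp])
  have Wslot: "in_slot \<theta> (slot_of \<theta> (fst a)) (fst a)" if "a \<in> W" for a
    using valid_slot[OF sm] Wprops[OF that] by blast
  have Wslot_lt: "slot_of \<theta> (fst a) < jf" if "a \<in> W" for a
  proof -
    have "\<theta> (slot_of \<theta> (fst a)) < \<theta> jf" using Wslot[OF that] Wprops[OF that] dlnn[of a]
      unfolding in_slot_def by linarith
    then show ?thesis using sm by (simp add: strict_mono_less)
  qed
  define Wl where "Wl = {a\<in>W. \<theta> (Suc j0) < fst a}"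
  define W0 where "W0 = {a\<in>W. in_slot \<theta> j0 (fst a)}"
  have finWl: "finite Wl" unfolding Wl_def using finW by simp
  have finW0: "finite W0" unfolding W0_def using finW by simp
  have phi0: "\<phi> j0 = (\<Sum>a\<in>W0. snd a)" unfolding W0_def using phiA[of j0] j_lt by simp
  have W0slot: "slot_of \<theta> (fst a) = j0" if "a \<in> W0" for a
    using slot_unique[OF sm] that unfolding W0_def by blast
  have rest_eq: "rest = (\<Sum>a\<in>Wl. snd a)"
  proof -
    have "rest = (\<Sum>j\<in>{Suc j0..<jf}. \<Sum>a\<in>{a\<in>W. in_slot \<theta> j (fst a)}. snd a)"
      unfolding rest_def by (rule sum.cong) (use phiA in auto)
    also have "\<dots> = (\<Sum>j\<in>{Suc j0..<jf}. \<Sum>a\<in>{a. a \<in> Wl \<and> (slot_of \<theta> \<circ> fst) a = j}. snd a)"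
    proof (rule sum.cong[OF refl])
      fix j assume j: "j \<in> {Suc j0..<jf}"
      have "{a\<in>W. in_slot \<theta> j (fst a)} = {a. a \<in> Wl \<and> (slot_of \<theta> \<circ> fst) a = j}"
      proof (intro set_eqI iffI)
        fix a assume a: "a \<in> {a\<in>W. in_slot \<theta> j (fst a)}"
        then have "slot_of \<theta> (fst a) = j" using slot_unique[OF sm] by blast
        moreover have "\<theta> (Suc j0) \<le> \<theta> j" using j sm by (simp add: strict_mono_less_eq)
        ultimately show "a \<in> {a. a \<in> Wl \<and> (slot_of \<theta> \<circ> fst) a = j}"
          using a unfolding Wl_def in_slot_def by auto
      next
        fix a assume a: "a \<in> {a. a \<in> Wl \<and> (slot_of \<theta> \<circ> fst) a = j}"
        then have aW: "a \<in> W" "slot_of \<theta> (fst a) = j" unfolding Wl_def by auto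
        then show "a \<in> {a\<in>W. in_slot \<theta> j (fst a)}" using Wslot[OF aW(1)] by simp
      qed
      then show "(\<Sum>a\<in>{a\<in>W. in_slot \<theta> j (fst a)}. snd a) = (\<Sum>a\<in>{a. a \<in> Wl \<and> (slot_of \<theta> \<circ> fst) a = j}. snd a)"
        by simp
    qed
    also have "\<dots> = (\<Sum>a\<in>Wl. snd a)"
    proof (rule sum.group[OF finWl])
      show "finite {Suc j0..<jf}" by simp
      show "(slot_of \<theta> \<circ> fst) ` Wl \<subseteq> {Suc j0..<jf}"
      proof
        fix y assume "y \<in> (slot_of \<theta> \<circ> fst) ` Wl"
        then obtain a where a: "a \<in> Wl" "y = slot_of \<theta> (fst a)" by auto
        have aW: "a \<in> W" using a(1) unfolding Wl_def by simp
        have f1: "fst a \<le> \<theta> (Suc y)" using Wslot[OF aW] unfolding a(2) in_slot_def by simp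
        have f2: "\<theta> (Suc j0) < fst a" using a(1) unfolding Wl_def by simp
        have "\<theta> (Suc j0) < \<theta> (Suc y)" using f1 f2 by linarith
        then have "Suc j0 < Suc y" using sm by (simp add: strict_mono_less)
        then show "y \<in> {Suc j0..<jf}" using Wslot_lt[OF aW] a(2) by simp
      qed
    qed
    finally show ?thesis .
  qed
  have Wl_good: "good \<theta> R pbar t (\<theta> jf) Wl"
  proof -
    have "good \<theta> R pbar (\<theta> j0) (\<theta> jf) Wl" by (rule good_subset[OF gW]) (auto simp: Wl_def)
    moreover have "\<forall>a\<in>Wl. t \<le> fst a"
    proof
      fix a assume "a \<in> Wl" then have "\<theta> (Suc j0) < fst a" unfolding Wl_def by simp
      then show "t \<le> fst a" using t_in(2) by linarith
    qed
    ultimately show ?thesis by (rule good_raise)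
  qed
  define c where "c = (if pbar j0 = 0 then 0 else nat (\<lceil>x\<rceil> - 1))"
  have UBc: "c + (\<Sum>a\<in>A'. snd a) \<le> \<Phi>" if gA: "good \<theta> R pbar t (\<theta> jf) A'" for A'
  proof (cases "c = 0")
    case True
    have "n * (\<Sum>a\<in>A'. snd a) \<le> n * \<Phi>"
      using cap_ge[OF sm Rp order_trans[OF t_in(1) tle] good_mono[OF gA t_in(1)], where n=n] D1 by simp
    then show ?thesis using True n_pos by simp
  next
    case False
    then have pb: "1 \<le> pbar j0" unfolding c_def by (cases "pbar j0 = 0") auto
    have cx: "real c < x" using False unfolding c_def
      by (cases "pbar j0 = 0") (auto, linarith)
    define U where "U = (\<lambda>i::nat. (t - real i / R j0, 1::nat)) ` {1..c}"
    have lo: "\<theta> j0 < t - real c / R j0"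
    proof -
      have "real c / r < x / r" using cx r by (simp add: divide_strict_right_mono)
      then show ?thesis using tx unfolding r_def by linarith
    qed
    note uu = units[of \<theta> R j0 t c pbar "\<theta> j0" "\<theta> jf",
        OF sm Rp lo less_imp_le[OF t_in(2)] pb less_imp_le[OF lo] tle, folded U_def]
    have gA0: "good \<theta> R pbar (\<theta> j0) (\<theta> jf) A'" by (rule good_mono[OF gA t_in(1)])
    have sep: "\<forall>u\<in>U. \<forall>a\<in>A'. fst u < fst a \<and> fst u + dl \<theta> R u \<le> fst a"
      using uu(2) gA unfolding good_def by force
    note gu = good_union[OF good_mono[OF uu(1) order_refl] gA0 sep]
    have "n * (\<Sum>a\<in>U \<union> A'. snd a) \<le> n * \<Phi>"
      using cap_ge[OF sm Rp order_trans[OF t_in(1) tle] gu(1), where n=n] D1 by simp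
    then have "(\<Sum>a\<in>U \<union> A'. snd a) \<le> \<Phi>" using n_pos by simp
    then show ?thesis using gu(2) uu(3) by simp
  qed
  have cPhi: "c \<le> \<Phi>" using UBc[of "{}"] unfolding good_def by simp
  have UB: "data_capacity \<theta> R pbar n t (\<theta> jf) \<le> n * (\<Phi> - c)"
  proof (rule cap_le[OF Rp])
    fix A' assume "good \<theta> R pbar t (\<theta> jf) A'"
    then have "(\<Sum>a\<in>A'. snd a) \<le> \<Phi> - c" using UBc by fastforce
    then show "n * (\<Sum>a\<in>A'. snd a) \<le> n * (\<Phi> - c)" by simp
  qed
  have pb0: "\<phi> j0 = 0" if "pbar j0 = 0"
  proof -
    have "snd a = 0" if "a \<in> W0" for a
      using Wprops[of a] W0slot[OF that] that \<open>pbar j0 = 0\<close> unfolding W0_def valid_def by auto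
    then show ?thesis using phi0 by simp
  qed
  define k where "k = nat \<lfloor>real (\<phi> j0) - x\<rfloor>"
  have LB: "n * (k + rest) \<le> data_capacity \<theta> R pbar n t (\<theta> jf)"
  proof (cases "k = 0")
    case True
    show ?thesis using cap_ge[OF sm Rp tle Wl_good] rest_eq True by simp
  next
    case False
    then have k1: "1 \<le> k" by simp
    have kle: "real k \<le> real (\<phi> j0) - x" using False unfolding k_def by linarith
    define P0 where "P0 = {a\<in>W0. 0 < snd a}"
    have finP0: "finite P0" unfolding P0_def using finW0 by simp
    have sumP0: "(\<Sum>a\<in>P0. snd a) = \<phi> j0"
      unfolding phi0 P0_def using finW0 by (simp add: sum.inter_filter) (rule sum.cong, auto)
    have "\<phi> j0 \<ge> 1" using kle k1 x0 by linarith
    then have P0ne: "P0 \<noteq> {}" using sumP0 by auto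
    obtain m where m: "m \<in> P0" "\<And>a. a \<in> P0 \<Longrightarrow> fst a \<le> fst m" using max_elem[OF finP0 P0ne] by blast
    obtain mn where mn: "mn \<in> P0" "\<And>a. a \<in> P0 \<Longrightarrow> fst mn \<le> fst a" using min_elem[OF finP0 P0ne] by blast
    have P0W: "P0 \<subseteq> W" "P0 \<subseteq> W0" unfolding P0_def W0_def by auto
    have dlP0: "dl \<theta> R a = real (snd a) / r" if "a \<in> W0" for a
      unfolding dl_def Delta_def r_def using W0slot[OF that] by simp
    define e where "e = fst m + dl \<theta> R m"
    have mW: "m \<in> W" "m \<in> W0" using m(1) P0W by auto
    have injW: "inj_on fst W" using gW unfolding good_def by blast
    have sd: "(\<Sum>a\<in>P0. dl \<theta> R a) \<le> e - fst mn"
    proof (rule sumdl[OF finP0])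
      show "inj_on fst P0" using injW P0W(1) by (rule inj_on_subset)
      show "\<forall>a\<in>P0. \<forall>b\<in>P0. fst a < fst b \<longrightarrow> fst a + dl \<theta> R a \<le> fst b" using Wpw P0W by blast
      show "\<forall>a\<in>P0. fst mn \<le> fst a \<and> fst a + dl \<theta> R a \<le> e"
      proof
        fix a assume a: "a \<in> P0"
        have "fst a + dl \<theta> R a \<le> e"
        proof (cases "fst a < fst m")
          case True then show ?thesis using Wpw[of a m] a mW P0W dlnn[of m] unfolding e_def by auto
        next
          case False then have "fst a = fst m" using m(2)[OF a] by simp
          then have "a = m" using injW a mW P0W unfolding inj_on_def by blast
          then show ?thesis unfolding e_def by simp
        qed
        then show "fst mn \<le> fst a \<and> fst a + dl \<theta> R a \<le> e" using mn(2)[OF a] by simp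
      qed
      show "fst mn \<le> e" using mn(2)[OF m(1)] dlnn[of m] unfolding e_def by simp
    qed
    have "(\<Sum>a\<in>P0. dl \<theta> R a) = (\<Sum>a\<in>P0. real (snd a) / r)"
      by (rule sum.cong) (use dlP0 P0W in auto)
    also have "\<dots> = real (\<phi> j0) / r" using sumP0 by (simp add: sum_divide_distrib[symmetric] flip: of_nat_sum)
    finally have sd2: "real (\<phi> j0) / r \<le> e - fst mn" using sd by simp
    have mnlo: "\<theta> j0 < fst mn" using mn(1) P0W unfolding W0_def in_slot_def by auto
    have key: "t + real k / r < e"
    proof -
      have "real k / r \<le> (real (\<phi> j0) - x) / r" using kle r by (simp add: divide_right_mono)
      also have "\<dots> = real (\<phi> j0) / r - (t - \<theta> j0)" unfolding x_def using r by (simp add: diff_divide_distrib)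
      finally show ?thesis using sd2 mnlo by linarith
    qed
    define pm where "pm = snd m"
    have pm1: "1 \<le> pm" using m(1) unfolding pm_def P0_def by simp
    have pmb: "pm \<le> pbar j0" using Wprops[OF mW(1)] W0slot[OF mW(2)] unfolding pm_def valid_def by simp
    have pmphi: "pm \<le> \<phi> j0" unfolding pm_def sumP0[symmetric] by (rule member_le_sum[OF m(1) _ finP0]) simp
    have dlm: "dl \<theta> R m = real pm / r" using dlP0[OF mW(2)] unfolding pm_def .
    have msl: "\<theta> j0 < fst m" "fst m \<le> \<theta> (Suc j0)" using mW(2) unfolding W0_def in_slot_def by auto
    have eW: "e \<le> \<theta> jf" using Wprops[OF mW(1)] unfolding e_def by simp
    have sepL: "fst m < fst b \<and> e \<le> fst b" if "b \<in> Wl" for b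
    proof -
      have "fst m < fst b" using that msl unfolding Wl_def by auto
      then show ?thesis using Wpw[of m b] mW that unfolding Wl_def e_def by auto
    qed
    have "\<exists>C. good \<theta> R pbar t (\<theta> jf) C \<and> (\<Sum>a\<in>C. snd a) = k \<and>
              (\<forall>u\<in>C. \<forall>b\<in>Wl. fst u < fst b \<and> fst u + dl \<theta> R u \<le> fst b)"
    proof (cases "pm \<le> k")
      case True
      define c' where "c' = k - pm"
      have eq1: "fst m - real c' / R j0 = e - real k / r"
        unfolding e_def dlm c'_def r_def using True by (simp add: of_nat_diff diff_divide_distrib add_divide_distrib)
      have lo: "\<theta> j0 < fst m - real c' / R j0" using eq1 key t_in by linarith
      have t1: "t \<le> fst m - real c' / R j0" using eq1 key by linarith
      note uu = units[of \<theta> R j0 "fst m" c' pbar t "\<theta> jf",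
        OF sm Rp lo msl(2) order_trans[OF pm1 pmb] t1 order_trans[OF msl(2) th1]]
      define U where "U = (\<lambda>i::nat. (fst m - real i / R j0, 1::nat)) ` {1..c'}"
      have tm: "t \<le> fst m" using key unfolding e_def dlm using r
        by (smt (verit, best) True divide_right_mono of_nat_le_iff)
      have gm: "good \<theta> R pbar t (\<theta> jf) {m}"
        by (rule good_single) (use Wprops[OF mW(1)] tm in auto)
      have sepUm: "\<forall>u\<in>U. \<forall>b\<in>{m}. fst u < fst b \<and> fst u + dl \<theta> R u \<le> fst b"
        using uu(2) unfolding U_def by blast
      note gC = good_union[OF uu(1)[folded U_def] gm sepUm]
      show ?thesis
      proof (intro exI conjI)
        show "good \<theta> R pbar t (\<theta> jf) (U \<union> {m})" by (rule gC(1))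
        show "(\<Sum>a\<in>U \<union> {m}. snd a) = k" using gC(2) uu(3) True unfolding U_def c'_def pm_def by simp
        show "\<forall>u\<in>U \<union> {m}. \<forall>b\<in>Wl. fst u < fst b \<and> fst u + dl \<theta> R u \<le> fst b"
        proof (intro ballI)
          fix u b assume u: "u \<in> U \<union> {m}" and b: "b \<in> Wl"
          show "fst u < fst b \<and> fst u + dl \<theta> R u \<le> fst b"
          proof (cases "u = m")
            case True then show ?thesis using sepL[OF b] unfolding e_def by simp
          next
            case False then have "u \<in> U" using u by blast
            then have "fst u < fst m \<and> fst u + dl \<theta> R u \<le> fst m" using uu(2) unfolding U_def by blast
            then show ?thesis using sepL[OF b] dlnn[of m] unfolding e_def by linarith
          qed
        qed
      qed
    next
      case False
      then have kpm: "k < pm" by simp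
      have tgt: "\<theta> j0 < t"
      proof (rule ccontr)
        assume "\<not> \<theta> j0 < t"
        then have "x = 0" unfolding x_def using t_in by simp
        then have "k = \<phi> j0" unfolding k_def by simp
        then show False using kpm pmphi by simp
      qed
      have slt: "in_slot \<theta> j0 t" unfolding in_slot_def using tgt t_in by simp
      have so: "slot_of \<theta> t = j0" by (rule slot_unique[OF sm slt])
      have dlt: "dl \<theta> R (t, k) = real k / r" unfolding dl_def Delta_def r_def using so by simp
      have gt: "good \<theta> R pbar t (\<theta> jf) {(t, k)}"
        by (rule good_single) (use slt so kpm pmb key eW dlt in \<open>auto simp: valid_def\<close>)
      show ?thesis
      proof (intro exI conjI)
        show "good \<theta> R pbar t (\<theta> jf) {(t, k)}" by (rule gt)
        show "(\<Sum>a\<in>{(t, k)}. snd a) = k" by simp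
        show "\<forall>u\<in>{(t, k)}. \<forall>b\<in>Wl. fst u < fst b \<and> fst u + dl \<theta> R u \<le> fst b"
        proof (intro ballI)
          fix u b assume u: "u \<in> {(t, k)}" and b: "b \<in> Wl"
          have "\<theta> (Suc j0) < fst b" using b unfolding Wl_def by simp
          then show "fst u < fst b \<and> fst u + dl \<theta> R u \<le> fst b"
            using u sepL[OF b] key dlt t_in(2) by auto
        qed
      qed
    qed
    then obtain C where C: "good \<theta> R pbar t (\<theta> jf) C" "(\<Sum>a\<in>C. snd a) = k"
      "\<forall>u\<in>C. \<forall>b\<in>Wl. fst u < fst b \<and> fst u + dl \<theta> R u \<le> fst b" by blast
    note gCL = good_union[OF C(1) Wl_good C(3)]
    show ?thesis using cap_ge[OF sm Rp tle gCL(1)] gCL(2) C(2) rest_eq by simp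
  qed
  define Dt where "Dt = data_capacity \<theta> R pbar n t (\<theta> jf)"
  have hatk: "max 0 (real n * of_int \<lfloor>real (\<phi> j0) - R j0 * (t - \<theta> j0)\<rfloor>) = real n * real k"
  proof -
    have "\<lfloor>real (\<phi> j0) - R j0 * (t - \<theta> j0)\<rfloor> = \<lfloor>real (\<phi> j0) - x\<rfloor>" unfolding x_def r_def by simp
    moreover have "max 0 (real n * of_int z) = real n * real (nat z)" for z :: int
    proof (cases "z \<ge> 0")
      case True then show ?thesis by simp
    next
      case False
      then have "real n * of_int z \<le> 0" by (simp add: mult_nonneg_nonpos)
      then show ?thesis using False by simp
    qed
    ultimately show ?thesis unfolding k_def by simp
  qed
  have hatr: "real n * (\<Sum>j = Suc j0..<jf. real (\<phi> j)) = real n * real rest"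
    unfolding rest_def by simp
  have L: "real n * real k + real n * real rest \<le> real Dt"
    using LB unfolding Dt_def by (metis distrib_left of_nat_add of_nat_le_iff of_nat_mult)
  have U: "real Dt \<le> real n * (real \<Phi> - real c)"
    using UB cPhi unfolding Dt_def by (metis of_nat_diff of_nat_le_iff of_nat_mult)
  have ar: "real \<Phi> - real c - real k - real rest \<le> 1"
  proof (cases "pbar j0 = 0")
    case True
    then show ?thesis using pb0 Phi_split by simp
  next
    case False
    then have cc: "real c \<ge> of_int \<lceil>x\<rceil> - 1" unfolding c_def by simp
    have "of_int (int (\<phi> j0) - \<lceil>x\<rceil>) \<le> real (\<phi> j0) - x" by simp
    then have "int (\<phi> j0) - \<lceil>x\<rceil> \<le> \<lfloor>real (\<phi> j0) - x\<rfloor>" by (simp add: le_floor_iff)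
    then have "real k \<ge> real (\<phi> j0) - of_int \<lceil>x\<rceil>" unfolding k_def by linarith
    then show ?thesis using cc Phi_split by simp
  qed
  have "real n * (real \<Phi> - real c) - (real n * real k + real n * real rest) \<le> real n"
  proof -
    have "real n * (real \<Phi> - real c) - (real n * real k + real n * real rest)
          = real n * (real \<Phi> - real c - real k - real rest)" by (simp add: algebra_simps)
    also have "\<dots> \<le> real n * 1" using ar by (intro mult_left_mono) auto
    finally show ?thesis by simp
  qed
  then show ?thesis unfolding hatk hatr Dt_def[symmetric] using L U by linarith
qed

end
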